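(* Let $\mathcal{X}$ be a finite set and let $d$ be a metric on $\mathcal{X}$. Then there exists a channel $W:\mathcal{X}\to\mathcal{X}$ that is matched to $d$.
   Context: A channel $W:\mathcal{X}\to\mathcal{X}$ with input and output alphabet $\mathcal{X}$ is given by a conditional probability distribution $\Pr:\mathcal{X}\times\mathcal{X}\to\mathbb{R}$, where $\Pr(x\mid y)=\Pr(x\text{ received}\mid y\text{ sent})\ge 0$ and $\sum_{x\in\mathcal{X}}\Pr(x\mid y)=1$ for every $y\in\mathcal{X}$. All codewords are assumed equally likely. A channel $W$ and a metric $d$ on $\mathcal{X}$ are called matched if for every (nonempty) code $C\subseteq\mathcal{X}$ and every $x\in\mathcal{X}$, $$\operatorname{argmax}_{y\in C}\Pr(x\text{ received}\mid y\text{ sent})=\operatorname{argmin}_{y\in C} d(x,y)$$ (equality of sets), i.e. maximum likelihood decoding on $W$ coincides with nearest neighbor decoding with respect to $d$ for every code. *)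

theory Defs
  imports Complex_Main
begin

definition is_metric :: "('a \<Rightarrow> 'a \<Rightarrow> real) \<Rightarrow> bool" where
  "is_metric d \<longleftrightarrow>
     (\<forall>x y. 0 \<le> d x y) \<and>
     (\<forall>x y. d x y = 0 \<longleftrightarrow> x = y) \<and>
     (\<forall>x y. d x y = d y x) \<and>
     (\<forall>x y z. d x z \<le> d x y + d y z)"

text \<open>A channel: W x y = Pr(x received | y sent).\<close>
definition is_channel :: "('a::finite \<Rightarrow> 'a \<Rightarrow> real) \<Rightarrow> bool" where
  "is_channel W \<longleftrightarrow> (\<forall>x y. 0 \<le> W x y) \<and> (\<forall>y. (\<Sum>x\<in>UNIV. W x y) = 1)"

text \<open>Maximum likelihood decoding coincides with nearest neighbour decoding for every
  nonempty code C and every received word x (equality of argmax / argmin sets).\<close>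
definition matched :: "('a \<Rightarrow> 'a \<Rightarrow> real) \<Rightarrow> ('a \<Rightarrow> 'a \<Rightarrow> real) \<Rightarrow> bool" where
  "matched W d \<longleftrightarrow>
     (\<forall>C x. C \<noteq> {} \<longrightarrow>
        {y \<in> C. \<forall>z\<in>C. W x z \<le> W x y} = {y \<in> C. \<forall>z\<in>C. d x y \<le> d x z})"

end

theory Submission
  imports Defs
begin

theorem mainTheorem1:
  fixes d :: "'a::finite \<Rightarrow> 'a \<Rightarrow> real"
  assumes "is_metric d"
  shows "\<exists>W. is_channel W \<and> matched W d"
proof -
  have pos: "\<And>x y. 0 \<le> d x y" and z: "\<And>x y. d x y = 0 \<longleftrightarrow> x = y"
    and sym: "\<And>x y. d x y = d y x"
    using assms unfolding is_metric_def by auto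
  define n where "n = real (card (UNIV::'a set))"
  have n1: "n \<ge> 1" unfolding n_def by (simp add: Suc_le_eq finite_UNIV_card_ge_0)
  define g where "g t = 1 / ((n+1) * (1 + t))" for t :: real
  have gpos: "\<And>t. t \<ge> 0 \<Longrightarrow> 0 < g t" unfolding g_def using n1 by auto
  have gle: "g t \<le> 1/(n+1)" if "t \<ge> 0" for t
  proof -
    have "(n+1) * 1 \<le> (n+1) * (1 + t)" using that n1 by (intro mult_left_mono) auto
    then show ?thesis unfolding g_def using n1 by (intro divide_left_mono) auto
  qed
  have gmono: "\<And>s t. s \<ge> 0 \<Longrightarrow> t \<ge> 0 \<Longrightarrow> g s \<le> g t \<longleftrightarrow> t \<le> s"
  proof -
    fix s t :: real assume "s \<ge> 0" "t \<ge> 0"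
    have a: "(n+1)*(1+s) > 0" "(n+1)*(1+t) > 0" using n1 \<open>s\<ge>0\<close> \<open>t\<ge>0\<close> by auto
    have "g s \<le> g t \<longleftrightarrow> (n+1)*(1+t) \<le> (n+1)*(1+s)"
      unfolding g_def using a by (simp only: divide_inverse mult_1 inverse_le_iff_le)
    also have "\<dots> \<longleftrightarrow> t \<le> s" using n1 by (simp add: mult_le_cancel_left_pos)
    finally show "g s \<le> g t \<longleftrightarrow> t \<le> s" .
  qed
  define W where "W x y = (if x = y then 1 - (\<Sum>u\<in>UNIV-{y}. g (d u y)) else g (d x y))" for x y
  have sumle: "(\<Sum>u\<in>UNIV-{y}. g (d u y)) \<le> (n - 1) / (n+1)" for y
  proof -
    have "(\<Sum>u\<in>UNIV-{y}. g (d u y)) \<le> (\<Sum>u\<in>UNIV-{y}. 1/(n+1))"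
      by (rule sum_mono) (use gle pos in auto)
    also have "\<dots> = (n - 1) / (n+1)"
      using finite_UNIV_card_ge_0[where ?'a='a] by (simp add: card_Diff_singleton n_def of_nat_diff Suc_le_eq)
    finally show ?thesis .
  qed
  have diag: "W y y \<ge> 2/(n+1)" for y
  proof -
    have "W y y \<ge> 1 - (n - 1) / (n+1)" using sumle[of y] unfolding W_def by simp
    moreover have "1 - (n - 1) / (n+1) = 2/(n+1)" using n1 by (simp add: field_simps)
    ultimately show ?thesis by simp
  qed
  have off: "x \<noteq> y \<Longrightarrow> 0 < W x y \<and> W x y \<le> 1/(n+1)" for x y
    unfolding W_def using gpos gle pos by auto
  have lt: "1/(n+1) < 2/(n+1)" using n1 by (simp add: divide_strict_right_mono)
  have key: "W x z \<le> W x y \<longleftrightarrow> d x y \<le> d x z" for x y z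
  proof (cases "y = x")
    case True
    then show ?thesis using pos[of x z] z[of x x] diag[of x] off[of x z] lt
      by (cases "z = x") auto
  next
    case False
    then have dy: "d x y > 0" using pos[of x y] z[of x y] by auto
    show ?thesis
    proof (cases "z = x")
      case True
      then show ?thesis using diag[of x] off[of x y] lt False dy z[of x x] by auto
    next
      case False2: False
      then show ?thesis using False unfolding W_def using gmono pos by auto
    qed
  qed
  have ch: "is_channel W"
    unfolding is_channel_def
  proof (intro conjI allI)
    fix x y
    show "0 \<le> W x y"
    proof (cases "x = y")
      case True
      have "0 \<le> 2/(n+1)" using n1 by simp
      then show ?thesis using diag[of y] True by (metis order_trans)
    next
      case False then show ?thesis using off by fastforce
    qed
  next
    fix y
    have "(\<Sum>x\<in>UNIV. W x y) = W y y + (\<Sum>x\<in>UNIV-{y}. W x y)"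
      by (simp add: sum.remove)
    also have "(\<Sum>x\<in>UNIV-{y}. W x y) = (\<Sum>u\<in>UNIV-{y}. g (d u y))"
      by (rule sum.cong) (auto simp: W_def)
    finally show "(\<Sum>x\<in>UNIV. W x y) = 1" by (simp add: W_def)
  qed
  have "matched W d" unfolding matched_def using key by auto
  with ch show ?thesis by blast
qed

end
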